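(* Let $p\geq 3$. Every $p$-regular hamiltonian graph is linked to a $p$-hamiltonian graph. Every $p$-regular hamiltonian 3-edge-connected graph is 3-linked to a 3-edge-connected $p$-hamiltonian graph.
   Context: All graphs are finite and connected; loops and multiple edges are allowed. Valency counts half-edges (a loop counts twice); $p$-regular means every vertex has valency $p$. A graph is hamiltonian if it has at least 2 vertices and contains a cycle (connected 2-regular subgraph) through every vertex; $p$-hamiltonian means $p$-regular, hamiltonian and loopless. $\Gamma/e$ denotes contraction of the edge $e$. Strongly linked: there are non-loop edges $e_i\in E(\Gamma_i)$ and an isomorphism $\Gamma_1/e_1\cong\Gamma_2/e_2$ carrying the image vertex of $e_1$ to that of $e_2$. Linked: joined by a finite chain of consecutively strongly linked graphs. 3-edge-connected: at least one vertex and connected after removal of any fewer than 3 edges. 3-linked: linked through a chain of 3-edge-connected graphs. *)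

theory Defs
  imports Main
begin

text \<open>Finite multigraphs (loops and multiple edges allowed). Each edge has an
  (unordered) pair of end vertices, stored as an ordered pair whose order is irrelevant.\<close>

record ('v, 'e) mgraph =
  verts :: "'v set"
  edges :: "'e set"
  ends  :: "'e \<Rightarrow> 'v \<times> 'v"

definition is_loop :: "('v, 'e) mgraph \<Rightarrow> 'e \<Rightarrow> bool" where
  "is_loop G e \<longleftrightarrow> fst (ends G e) = snd (ends G e)"

definition adj_rel :: "('v, 'e) mgraph \<Rightarrow> 'e set \<Rightarrow> ('v \<times> 'v) set" where
  "adj_rel G C = {(a, b). \<exists>e\<in>C. ends G e = (a, b) \<or> ends G e = (b, a)}"

definition connected_via :: "('v, 'e) mgraph \<Rightarrow> 'e set \<Rightarrow> bool" where
  "connected_via G C \<longleftrightarrow> (\<forall>u\<in>verts G. \<forall>v\<in>verts G. (u, v) \<in> (adj_rel G C)\<^sup>*)"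

definition is_graph :: "('v, 'e) mgraph \<Rightarrow> bool" where
  "is_graph G \<longleftrightarrow> finite (verts G) \<and> verts G \<noteq> {} \<and> finite (edges G) \<and>
     (\<forall>e\<in>edges G. fst (ends G e) \<in> verts G \<and> snd (ends G e) \<in> verts G) \<and>
     connected_via G (edges G)"

text \<open>Valency of v with respect to an edge set C (half-edges; a loop counts twice).\<close>
definition valency_in :: "('v, 'e) mgraph \<Rightarrow> 'e set \<Rightarrow> 'v \<Rightarrow> nat" where
  "valency_in G C v = card {e\<in>C. fst (ends G e) = v} + card {e\<in>C. snd (ends G e) = v}"

definition valency :: "('v, 'e) mgraph \<Rightarrow> 'v \<Rightarrow> nat" where
  "valency G v = valency_in G (edges G) v"

definition regular :: "nat \<Rightarrow> ('v, 'e) mgraph \<Rightarrow> bool" where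
  "regular p G \<longleftrightarrow> (\<forall>v\<in>verts G. valency G v = p)"

definition loopless :: "('v, 'e) mgraph \<Rightarrow> bool" where
  "loopless G \<longleftrightarrow> (\<forall>e\<in>edges G. \<not> is_loop G e)"

definition hamiltonian :: "('v, 'e) mgraph \<Rightarrow> bool" where
  "hamiltonian G \<longleftrightarrow> 2 \<le> card (verts G) \<and>
     (\<exists>C \<subseteq> edges G. connected_via G C \<and> (\<forall>v\<in>verts G. valency_in G C v = 2))"

definition p_hamiltonian :: "nat \<Rightarrow> ('v, 'e) mgraph \<Rightarrow> bool" where
  "p_hamiltonian p G \<longleftrightarrow> regular p G \<and> hamiltonian G \<and> loopless G"

definition contract :: "('v, 'e) mgraph \<Rightarrow> 'e \<Rightarrow> ('v, 'e) mgraph" where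
  "contract G e =
     (let u = fst (ends G e); v = snd (ends G e);
          rn = (\<lambda>w. if w = v then u else w)
      in \<lparr>verts = verts G - {v}, edges = edges G - {e},
          ends = (\<lambda>x. (rn (fst (ends G x)), rn (snd (ends G x))))\<rparr>)"

definition contract_vertex :: "('v, 'e) mgraph \<Rightarrow> 'e \<Rightarrow> 'v" where
  "contract_vertex G e = fst (ends G e)"

definition graph_iso :: "('v, 'e) mgraph \<Rightarrow> ('w, 'd) mgraph \<Rightarrow> ('v \<Rightarrow> 'w) \<Rightarrow> ('e \<Rightarrow> 'd) \<Rightarrow> bool" where
  "graph_iso G H f g \<longleftrightarrow> bij_betw f (verts G) (verts H) \<and> bij_betw g (edges G) (edges H) \<and>
     (\<forall>e\<in>edges G. ends H (g e) = (f (fst (ends G e)), f (snd (ends G e))) \<or>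
                   ends H (g e) = (f (snd (ends G e)), f (fst (ends G e))))"

definition strongly_linked :: "('v, 'e) mgraph \<Rightarrow> ('v, 'e) mgraph \<Rightarrow> bool" where
  "strongly_linked G1 G2 \<longleftrightarrow>
     (\<exists>e1\<in>edges G1. \<exists>e2\<in>edges G2. \<not> is_loop G1 e1 \<and> \<not> is_loop G2 e2 \<and>
        (\<exists>f g. graph_iso (contract G1 e1) (contract G2 e2) f g \<and>
               f (contract_vertex G1 e1) = contract_vertex G2 e2))"

definition linked :: "('v, 'e) mgraph \<Rightarrow> ('v, 'e) mgraph \<Rightarrow> bool" where
  "linked G H \<longleftrightarrow> is_graph G \<and> is_graph H \<and>
     (\<lambda>A B. is_graph A \<and> is_graph B \<and> strongly_linked A B)\<^sup>*\<^sup>* G H"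

definition three_edge_connected :: "('v, 'e) mgraph \<Rightarrow> bool" where
  "three_edge_connected G \<longleftrightarrow> verts G \<noteq> {} \<and>
     (\<forall>F \<subseteq> edges G. card F < 3 \<longrightarrow> connected_via G (edges G - F))"

definition three_linked :: "('v, 'e) mgraph \<Rightarrow> ('v, 'e) mgraph \<Rightarrow> bool" where
  "three_linked G H \<longleftrightarrow> is_graph G \<and> is_graph H \<and> three_edge_connected G \<and> three_edge_connected H \<and>
     (\<lambda>A B. is_graph A \<and> is_graph B \<and> three_edge_connected A \<and> three_edge_connected B \<and>
            strongly_linked A B)\<^sup>*\<^sup>* G H"

end

theory Submission imports Defs begin

definition cnt :: "('v, 'e) mgraph \<Rightarrow> 'e \<Rightarrow> 'v \<Rightarrow> nat" where
  "cnt G x a = (if fst (ends G x) = a then 1 else 0) + (if snd (ends G x) = a then 1 else 0)"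

definition oth :: "('v, 'e) mgraph \<Rightarrow> 'e \<Rightarrow> 'v \<Rightarrow> 'v" where
  "oth G x a = (if fst (ends G x) = a then snd (ends G x) else fst (ends G x))"

lemma valency_sum: "finite E \<Longrightarrow> valency_in G E a = (\<Sum>x\<in>E. cnt G x a)"
  unfolding valency_in_def cnt_def
  by (simp add: sum.distrib sum.inter_filter[symmetric])

lemma adj_mono: "C \<subseteq> D \<Longrightarrow> adj_rel G C \<subseteq> adj_rel G D"
  unfolding adj_rel_def by blast

lemma adj_sym: "(a, b) \<in> adj_rel G C \<Longrightarrow> (b, a) \<in> adj_rel G C"
  unfolding adj_rel_def by blast

lemma conn_mono: "connected_via G C \<Longrightarrow> C \<subseteq> D \<Longrightarrow> connected_via G D"
proof -
  assume a: "connected_via G C" "C \<subseteq> D"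
  have "(adj_rel G C)\<^sup>* \<subseteq> (adj_rel G D)\<^sup>*" using adj_mono[OF a(2)] by (rule rtrancl_mono)
  then show ?thesis using a(1) unfolding connected_via_def by blast
qed

lemma adj_agree: "(\<forall>x\<in>C. ends G2 x = ends G x) \<Longrightarrow> adj_rel G2 C = adj_rel G C"
  unfolding adj_rel_def by auto

lemma val_agree: "(\<forall>x\<in>C. ends G2 x = ends G x) \<Longrightarrow> valency_in G2 C a = valency_in G C a"
  unfolding valency_in_def
proof -
  assume a: "\<forall>x\<in>C. ends G2 x = ends G x"
  have "{e \<in> C. fst (ends G2 e) = a} = {e \<in> C. fst (ends G e) = a}"
       "{e \<in> C. snd (ends G2 e) = a} = {e \<in> C. snd (ends G e) = a}" using a by auto
  then show "card {e \<in> C. fst (ends G2 e) = a} + card {e \<in> C. snd (ends G2 e) = a} =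
    card {e \<in> C. fst (ends G e) = a} + card {e \<in> C. snd (ends G e) = a}" by simp
qed

lemma sum_two: "finite E \<Longrightarrow> l \<in> E \<Longrightarrow> h \<in> E \<Longrightarrow> l \<noteq> h \<Longrightarrow>
   (\<Sum>x\<in>E. f x) = f l + f h + (\<Sum>x\<in>E - {l, h}. f x)"
proof -
  assume a: "finite E" "l \<in> E" "h \<in> E" "l \<noteq> h"
  have "(\<Sum>x\<in>E. f x) = f l + (\<Sum>x\<in>E - {l}. f x)" using a sum.remove by metis
  also have "(\<Sum>x\<in>E - {l}. f x) = f h + (\<Sum>x\<in>E - {l} - {h}. f x)"
    using a by (intro sum.remove) auto
  finally show ?thesis by (simp add: Diff_insert2[symmetric] insert_commute add.assoc)
qed

locale step =
  fixes G :: "('v, 'e) mgraph" and C :: "'e set" and l e h :: 'e and v w :: 'v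
  assumes gr: "is_graph G" and CE: "C \<subseteq> edges G" and Cconn: "connected_via G C"
    and lE: "l \<in> edges G" and lends: "ends G l = (v, v)" and lC: "l \<notin> C"
    and eC: "e \<in> C" and eends: "ends G e = (v, w) \<or> ends G e = (w, v)" and vw: "v \<noteq> w"
    and hE: "h \<in> edges G" and hC: "h \<notin> C" and hw: "fst (ends G h) = w \<or> snd (ends G h) = w"
    and ho: "oth G h w \<noteq> v"
begin

definition "G2 = G\<lparr>ends := (ends G)(l := (v, w), h := (v, oth G h w))\<rparr>"

lemma hends: "ends G h = (w, oth G h w) \<or> ends G h = (oth G h w, w)"
  using hw unfolding oth_def by (cases "ends G h") auto

lemma lh: "l \<noteq> h" using lends hw vw by auto

lemma eE: "e \<in> edges G" using eC CE by auto

lemma fin: "finite (edges G)" using gr unfolding is_graph_def by auto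

lemma G2v[simp]: "verts G2 = verts G" and G2e[simp]: "edges G2 = edges G"
  unfolding G2_def by auto

lemma G2l: "ends G2 l = (v, w)" and G2h: "ends G2 h = (v, oth G h w)"
  unfolding G2_def using lh by auto

lemma agree: "x \<noteq> l \<Longrightarrow> x \<noteq> h \<Longrightarrow> ends G2 x = ends G x"
  unfolding G2_def by auto

lemma agreeC: "\<forall>x\<in>C. ends G2 x = ends G x"
  using agree lC hC by metis

lemma inv: "\<forall>x\<in>edges G. fst (ends G x) \<in> verts G \<and> snd (ends G x) \<in> verts G"
  using gr unfolding is_graph_def by auto

lemma vV: "v \<in> verts G" using inv lE lends by force
lemma wV: "w \<in> verts G" using inv eE eends by force
lemma oV: "oth G h w \<in> verts G" using inv hE hends by force

lemma G2_graph: "is_graph G2"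
proof -
  have "connected_via G2 C" using Cconn adj_agree[OF agreeC]
    unfolding connected_via_def by simp
  then have "connected_via G2 (edges G2)" using conn_mono CE by auto
  moreover have "\<forall>x\<in>edges G2. fst (ends G2 x) \<in> verts G2 \<and> snd (ends G2 x) \<in> verts G2"
  proof
    fix x assume "x \<in> edges G2"
    then show "fst (ends G2 x) \<in> verts G2 \<and> snd (ends G2 x) \<in> verts G2"
      using inv agree[of x] G2l G2h vV wV oV lh by (cases "x = l"; cases "x = h") auto
  qed
  ultimately show ?thesis using gr unfolding is_graph_def by auto
qed

lemma G2_ham: "hamiltonian G \<Longrightarrow> \<forall>x\<in>verts G. valency_in G C x = 2 \<Longrightarrow> hamiltonian G2"
proof -
  assume h: "hamiltonian G" "\<forall>x\<in>verts G. valency_in G C x = 2"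
  have "connected_via G2 C" using Cconn adj_agree[OF agreeC] unfolding connected_via_def by simp
  moreover have "\<forall>x\<in>verts G2. valency_in G2 C x = 2" using h(2) val_agree[OF agreeC] by simp
  moreover have "2 \<le> card (verts G2)" using h(1) unfolding hamiltonian_def by simp
  ultimately show ?thesis unfolding hamiltonian_def using CE by auto
qed

lemma cnt_eq: "cnt G2 l a + cnt G2 h a = cnt G l a + cnt G h a"
proof -
  define o' where "o' = oth G h w"
  have h: "ends G h = (w, o') \<or> ends G h = (o', w)" using hends o'_def by simp
  have "cnt G2 l a + cnt G2 h a = (if v = a then 1 else 0) + (if w = a then 1 else 0)
      + (if v = a then 1 else 0) + (if o' = a then 1 else 0)"
    unfolding cnt_def G2l G2h o'_def by simp
  moreover have "cnt G l a + cnt G h a = (if v = a then 1 else 0) + (if v = a then 1 else 0)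
      + (if w = a then 1 else 0) + (if o' = a then 1 else 0)"
    using h unfolding cnt_def lends by (elim disjE) simp_all
  ultimately show ?thesis by simp
qed

lemma G2_val: "valency G2 a = valency G a"
proof -
  have "valency G2 a = (\<Sum>x\<in>edges G. cnt G2 x a)"
    unfolding valency_def by (simp add: valency_sum[OF fin])
  also have "\<dots> = cnt G2 l a + cnt G2 h a + (\<Sum>x\<in>edges G - {l, h}. cnt G2 x a)"
    by (rule sum_two[OF fin lE hE lh])
  also have "(\<Sum>x\<in>edges G - {l, h}. cnt G2 x a) = (\<Sum>x\<in>edges G - {l, h}. cnt G x a)"
  proof (rule sum.cong)
    fix x assume "x \<in> edges G - {l, h}"
    then have "ends G2 x = ends G x" using agree by blast
    then show "cnt G2 x a = cnt G x a" unfolding cnt_def by simp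
  qed simp
  also have "cnt G2 l a + cnt G2 h a + (\<Sum>x\<in>edges G - {l, h}. cnt G x a)
     = (\<Sum>x\<in>edges G. cnt G x a)" unfolding cnt_eq sum_two[OF fin lE hE lh, of "\<lambda>x. cnt G x a"] ..
  also have "\<dots> = valency G a" unfolding valency_def by (simp add: valency_sum[OF fin])
  finally show ?thesis .
qed

lemma G2_reg: "regular p G \<Longrightarrow> regular p G2"
  unfolding regular_def using G2_val by simp

lemma G2_loops: "card {x\<in>edges G2. is_loop G2 x} < card {x\<in>edges G. is_loop G x}"
proof -
  have "{x\<in>edges G2. is_loop G2 x} \<subseteq> {x\<in>edges G. is_loop G x} - {l}"
  proof
    fix x assume x: "x \<in> {x\<in>edges G2. is_loop G2 x}"
    show "x \<in> {x\<in>edges G. is_loop G x} - {l}"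
    proof (cases "x = l \<or> x = h")
      case True then show ?thesis using x G2l G2h vw ho unfolding is_loop_def by auto
    next
      case False then show ?thesis using x agree[of x] unfolding is_loop_def by auto
    qed
  qed
  moreover have "l \<in> {x\<in>edges G. is_loop G x}" using lE lends unfolding is_loop_def by auto
  moreover have "finite {x\<in>edges G. is_loop G x}" using fin by auto
  ultimately show ?thesis by (meson card_Diff1_less card_mono dual_order.strict_trans2 finite_Diff)
qed

lemma G2_sl: "strongly_linked G G2"
  unfolding strongly_linked_def
proof (intro bexI conjI exI)
  show "e \<in> edges G" "e \<in> edges G2" using eE by auto
  have e2: "ends G2 e = ends G e" using agree eC lC hC by metis
  show "\<not> is_loop G e" "\<not> is_loop G2 e" using eends vw e2 unfolding is_loop_def by auto
  show "id (contract_vertex G e) = contract_vertex G2 e" using e2 unfolding contract_vertex_def by simp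
  show "graph_iso (contract G e) (contract G2 e) id id"
  proof -
    define r where "r = (\<lambda>x. if x = snd (ends G e) then fst (ends G e) else x)"
    have rvw: "r v = r w" using eends vw unfolding r_def by (elim disjE) simp_all
    have ce: "\<And>x. ends (contract G e) x = (r (fst (ends G x)), r (snd (ends G x)))"
      "\<And>x. ends (contract G2 e) x = (r (fst (ends G2 x)), r (snd (ends G2 x)))"
      "verts (contract G2 e) = verts (contract G e)" "edges (contract G2 e) = edges (contract G e)"
      unfolding contract_def Let_def r_def e2 by simp_all
    have "\<forall>x\<in>edges (contract G e). ends (contract G2 e) x = (r (fst (ends G x)), r (snd (ends G x))) \<or>
                   ends (contract G2 e) x = (r (snd (ends G x)), r (fst (ends G x)))"
    proof
      fix x
      show "ends (contract G2 e) x = (r (fst (ends G x)), r (snd (ends G x))) \<or>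
                   ends (contract G2 e) x = (r (snd (ends G x)), r (fst (ends G x)))"
      proof (cases "x = l")
        case True then show ?thesis using ce(2) G2l lends rvw by simp
      next
        case nl: False
        show ?thesis
        proof (cases "x = h")
          case True then show ?thesis using ce(2) G2h hends rvw by (elim disjE) simp_all
        next
          case False then show ?thesis using ce(2) agree nl by simp
        qed
      qed
    qed
    then show ?thesis unfolding graph_iso_def using ce by (simp add: bij_betw_id)
  qed
qed

lemma G2_3ec: "three_edge_connected G \<Longrightarrow> three_edge_connected G2"
  unfolding three_edge_connected_def
proof (intro conjI allI impI)
  assume a: "verts G \<noteq> {} \<and> (\<forall>F\<subseteq>edges G. card F < 3 \<longrightarrow> connected_via G (edges G - F))"
  then show "verts G2 \<noteq> {}" by simp
  fix F assume F: "F \<subseteq> edges G2" "card F < 3"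
  have FE: "F \<subseteq> edges G" using F(1) by simp
  have finF: "finite F" using FE fin by (rule finite_subset)
  have aa: "\<And>F. F \<subseteq> edges G \<Longrightarrow> card F < 3 \<Longrightarrow> connected_via G (edges G - F)" using a by blast
  show "connected_via G2 (edges G2 - F)"
  proof (cases "l \<notin> F \<and> h \<notin> F \<and> card F = 2")
    case True
    have lv: "(v, w) \<in> adj_rel G2 (edges G - F)" "(w, v) \<in> adj_rel G2 (edges G - F)"
      using G2l lE True unfolding adj_rel_def by auto
    have ho2: "(v, oth G h w) \<in> adj_rel G2 (edges G - F)" "(oth G h w, v) \<in> adj_rel G2 (edges G - F)"
      using G2h hE True unfolding adj_rel_def by auto
    have sub: "adj_rel G (edges G - F) \<subseteq> (adj_rel G2 (edges G - F))\<^sup>*"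
    proof
      fix p assume "p \<in> adj_rel G (edges G - F)"
      then obtain a b x where p: "p = (a, b)" "x \<in> edges G - F" "ends G x = (a, b) \<or> ends G x = (b, a)"
        unfolding adj_rel_def by auto
      show "p \<in> (adj_rel G2 (edges G - F))\<^sup>*"
      proof (cases "x = l")
        case True then show ?thesis using p lends by auto
      next
        case nl: False
        show ?thesis
        proof (cases "x = h")
          case True
          then have "(a = w \<and> b = oth G h w) \<or> (b = w \<and> a = oth G h w)" using p hends by auto
          then show ?thesis using lv ho2 p
            by (meson converse_rtrancl_into_rtrancl r_into_rtrancl)
        next
          case False
          then have "ends G2 x = ends G x" using nl agree by blast
          then have "p \<in> adj_rel G2 (edges G - F)" using p unfolding adj_rel_def by auto
          then show ?thesis by auto
        qed
      qed
    qed
    have "connected_via G (edges G - F)" using aa[OF FE F(2)] .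
    then show ?thesis unfolding connected_via_def using rtrancl_subset_rtrancl[OF sub] by auto
  next
    case False
    define F' where "F' = (F - {l}) \<union> {h}"
    have "card F' \<le> card (F - {l}) + 1" unfolding F'_def using card_Un_le[of "F - {l}" "{h}"] by simp
    have "card F' < 3"
    proof (cases "h \<in> F")
      case True
      then have "F' \<subseteq> F" unfolding F'_def by auto
      then show ?thesis using F(2) card_mono[OF finF] by (meson le_less_trans)
    next
      case False
      have c1: "card F' \<le> card (F - {l}) + 1" unfolding F'_def using card_Un_le[of "F - {l}" "{h}"] by simp
      show ?thesis
      proof (cases "l \<in> F")
        case True
        then have "card (F - {l}) = card F - 1" using finF by auto
        then show ?thesis using c1 F by linarith
      next
        case nl: False
        then have "card F \<noteq> 2" using \<open>\<not> (l \<notin> F \<and> h \<notin> F \<and> card F = 2)\<close> False by auto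
        then have "card F \<le> 1" using F(2) by linarith
        moreover have "card (F - {l}) \<le> card F" using card_mono[OF finF, of "F - {l}"] by blast
        ultimately show ?thesis using c1 by linarith
      qed
    qed
    moreover have "F' \<subseteq> edges G" using FE hE unfolding F'_def by blast
    ultimately have c: "connected_via G (edges G - F')" using aa by blast
    have sub: "adj_rel G (edges G - F') \<subseteq> (adj_rel G2 (edges G - F))\<^sup>*"
    proof
      fix p assume "p \<in> adj_rel G (edges G - F')"
      then obtain a b x where p: "p = (a, b)" "x \<in> edges G - F'" "ends G x = (a, b) \<or> ends G x = (b, a)"
        unfolding adj_rel_def by auto
      show "p \<in> (adj_rel G2 (edges G - F))\<^sup>*"
      proof (cases "x = l")
        case True then show ?thesis using p lends by auto
      next
        case nl: False
        then have "x \<noteq> h" "x \<in> edges G - F" using p unfolding F'_def by auto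
        then have "ends G2 x = ends G x" "x \<in> edges G - F" using nl agree by auto
        then have "p \<in> adj_rel G2 (edges G - F)" using p unfolding adj_rel_def by auto
        then show ?thesis by auto
      qed
    qed
    show ?thesis using c unfolding connected_via_def using rtrancl_subset_rtrancl[OF sub] by auto
  qed
qed

end


lemma nonloop_at:
  assumes "C \<subseteq> edges G" "connected_via G C" "2 \<le> card (verts G)" "v \<in> verts G"
  shows "\<exists>e\<in>C. (fst (ends G e) = v \<and> snd (ends G e) \<noteq> v) \<or> (snd (ends G e) = v \<and> fst (ends G e) \<noteq> v)"
proof (rule ccontr)
  assume n: "\<not> ?thesis"
  have st: "\<And>a b. (a, b) \<in> adj_rel G C \<Longrightarrow> a = v \<Longrightarrow> b = v"
  proof -
    fix a b assume "(a, b) \<in> adj_rel G C" "a = v"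
    then obtain x where "x \<in> C" "ends G x = (a, b) \<or> ends G x = (b, a)" unfolding adj_rel_def by auto
    then show "b = v" using n \<open>a = v\<close> by (elim disjE) (metis fst_conv snd_conv)+
  qed
  have r: "\<And>b. (v, b) \<in> (adj_rel G C)\<^sup>* \<Longrightarrow> b = v"
  proof -
    fix b assume "(v, b) \<in> (adj_rel G C)\<^sup>*"
    then show "b = v" by (induction rule: rtrancl_induct) (auto dest: st)
  qed
  have "\<not> verts G \<subseteq> {v}"
  proof
    assume "verts G \<subseteq> {v}"
    then have "card (verts G) \<le> card {v}" by (intro card_mono) auto
    then show False using assms(3) by simp
  qed
  then obtain u where u: "u \<in> verts G" "u \<noteq> v" by auto
  then have "(v, u) \<in> (adj_rel G C)\<^sup>*" using assms(2,4) unfolding connected_via_def by auto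
  then show False using r u by blast
qed

lemma loop_notin:
  assumes "C \<subseteq> E" "finite E" "e \<in> C" "ends G e = (v, w) \<or> ends G e = (w, v)" "v \<noteq> w"
    "valency_in G C v = 2" "ends G l = (v, v)"
  shows "l \<notin> C"
proof
  assume lC: "l \<in> C"
  have fC: "finite C" using assms(1,2) finite_subset by blast
  have le: "e \<noteq> l"
  proof
    assume "e = l"
    then have "ends G e = (v, v)" using assms(7) by simp
    then show False using assms(4,5) by auto
  qed
  have "(\<Sum>x\<in>{l, e}. cnt G x v) \<le> (\<Sum>x\<in>C. cnt G x v)"
    using lC assms(3) fC by (intro sum_mono2) auto
  moreover have "(\<Sum>x\<in>{l, e}. cnt G x v) = cnt G l v + cnt G e v" using le by simp
  moreover have "cnt G l v = 2" using assms(7) unfolding cnt_def by simp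
  moreover have "cnt G e v = 1" using assms(4,5) unfolding cnt_def by (elim disjE) simp_all
  moreover have "(\<Sum>x\<in>C. cnt G x v) = 2" using assms(6) valency_sum[OF fC, of G v] by simp
  ultimately show False by simp
qed

lemma exists_h:
  assumes fin: "finite E" and CE: "C \<subseteq> E" and eC: "e \<in> C" and eends: "ends G e = (v, w) \<or> ends G e = (w, v)"
    and vw: "v \<noteq> w" and vw2: "valency_in G C w = 2" and vv2: "valency_in G C v = 2"
    and lE: "l \<in> E" and lends: "ends G l = (v, v)" and lC: "l \<notin> C"
    and pw: "valency_in G E w = p" and pv: "valency_in G E v = p"
  shows "\<exists>h\<in>E - C. (fst (ends G h) = w \<or> snd (ends G h) = w) \<and> oth G h w \<noteq> v"
proof (rule ccontr)
  assume n: "\<not> ?thesis"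
  define N where "N = {x\<in>E - C. fst (ends G x) = w \<or> snd (ends G x) = w}"
  have fC: "finite C" using fin CE finite_subset by blast
  have fN: "finite N" unfolding N_def using fin by auto
  have Nends: "\<And>x. x \<in> N \<Longrightarrow> ends G x = (w, v) \<or> ends G x = (v, w)"
  proof -
    fix x assume x: "x \<in> N"
    then have "oth G x w = v" using n unfolding N_def by auto
    then show "ends G x = (w, v) \<or> ends G x = (v, w)" using x unfolding N_def oth_def
      by (cases "ends G x") (auto split: if_splits)
  qed
  have cw1: "\<And>x. x \<in> N \<Longrightarrow> cnt G x w = 1" and cv1: "\<And>x. x \<in> N \<Longrightarrow> cnt G x v = 1"
    using Nends vw unfolding cnt_def by fastforce+
  have sEw: "(\<Sum>x\<in>E. cnt G x w) = (\<Sum>x\<in>E - C. cnt G x w) + (\<Sum>x\<in>C. cnt G x w)"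
    using sum.subset_diff[OF CE fin] by simp
  have "(\<Sum>x\<in>E - C. cnt G x w) = (\<Sum>x\<in>N. cnt G x w)"
    by (rule sum.mono_neutral_right) (use fin in \<open>auto simp: N_def cnt_def\<close>)
  also have "\<dots> = (\<Sum>x\<in>N. 1)" using cw1 by (rule sum.cong[OF refl])
  also have "\<dots> = card N" by simp
  finally have "p = card N + 2" using sEw pw vw2 valency_sum[OF fin, of G w] valency_sum[OF fC, of G w] by simp
  have lN: "l \<notin> N" unfolding N_def using lends vw by auto
  have disj: "C \<inter> insert l N = {}" using lC unfolding N_def by auto
  have sub: "C \<union> insert l N \<subseteq> E" using CE lE unfolding N_def by auto
  have "(\<Sum>x\<in>C \<union> insert l N. cnt G x v) \<le> (\<Sum>x\<in>E. cnt G x v)"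
    using sub fin by (intro sum_mono2) auto
  moreover have "(\<Sum>x\<in>C \<union> insert l N. cnt G x v) = (\<Sum>x\<in>C. cnt G x v) + (cnt G l v + (\<Sum>x\<in>N. cnt G x v))"
    using sum.union_disjoint[OF fC _ disj] fN lN by simp
  moreover have "(\<Sum>x\<in>N. cnt G x v) = card N" using cv1 by simp
  moreover have "cnt G l v = 2" using lends unfolding cnt_def by simp
  moreover have "(\<Sum>x\<in>C. cnt G x v) = 2" using vv2 valency_sum[OF fC, of G v] by simp
  moreover have "(\<Sum>x\<in>E. cnt G x v) = p" using pv valency_sum[OF fin, of G v] by simp
  ultimately show False using \<open>p = card N + 2\<close> by simp
qed


lemma main_ind:
  fixes G :: "('v, 'e) mgraph"
  shows "is_graph G \<Longrightarrow> regular p G \<Longrightarrow> hamiltonian G \<Longrightarrow>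
    \<exists>H. (\<lambda>A B. is_graph A \<and> is_graph B \<and> strongly_linked A B)\<^sup>*\<^sup>* G H \<and> p_hamiltonian p H \<and>
      (three_edge_connected G \<longrightarrow>
        (\<lambda>A B. is_graph A \<and> is_graph B \<and> three_edge_connected A \<and> three_edge_connected B \<and>
            strongly_linked A B)\<^sup>*\<^sup>* G H \<and> three_edge_connected H)"
proof (induction "card {x\<in>edges G. is_loop G x}" arbitrary: G rule: less_induct)
  case less
  show ?case
  proof (cases "loopless G")
    case True
    then have "p_hamiltonian p G" using less.prems unfolding p_hamiltonian_def by simp
    then show ?thesis by blast
  next
    case False
    then obtain l where l: "l \<in> edges G" "is_loop G l" unfolding loopless_def by auto
    define v where "v = fst (ends G l)"
    have lends: "ends G l = (v, v)" using l(2) unfolding is_loop_def v_def by (cases "ends G l") auto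
    have fin: "finite (edges G)" using less.prems(1) unfolding is_graph_def by auto
    have vV: "v \<in> verts G" using less.prems(1) l(1) unfolding is_graph_def v_def by auto
    obtain C where C: "C \<subseteq> edges G" "connected_via G C" "\<forall>x\<in>verts G. valency_in G C x = 2"
      and card2: "2 \<le> card (verts G)" using less.prems(3) unfolding hamiltonian_def by auto
    obtain e where e: "e \<in> C" "(fst (ends G e) = v \<and> snd (ends G e) \<noteq> v) \<or> (snd (ends G e) = v \<and> fst (ends G e) \<noteq> v)"
      using nonloop_at[OF C(1,2) card2 vV] by blast
    define w where "w = oth G e v"
    have eends: "ends G e = (v, w) \<or> ends G e = (w, v)" and vw: "v \<noteq> w"
      using e(2) unfolding w_def oth_def by (cases "ends G e"; auto)+
    have wV: "w \<in> verts G" using less.prems(1) e(1) C(1) eends unfolding is_graph_def by force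
    have lC: "l \<notin> C" using loop_notin[OF C(1) fin e(1) eends vw _ lends] C(3) vV by simp
    have reg: "\<And>x. x \<in> verts G \<Longrightarrow> valency_in G (edges G) x = p"
      using less.prems(2) unfolding regular_def valency_def by simp
    obtain h where h: "h \<in> edges G - C" "fst (ends G h) = w \<or> snd (ends G h) = w" "oth G h w \<noteq> v"
      using exists_h[OF fin C(1) e(1) eends vw _ _ l(1) lends lC reg[OF wV] reg[OF vV]] C(3) vV wV
      by blast
    interpret S: step G C l e h v w
      using less.prems(1) C(1,2) l(1) lends lC e(1) eends vw h by unfold_locales auto
    obtain H where H: "(\<lambda>A B. is_graph A \<and> is_graph B \<and> strongly_linked A B)\<^sup>*\<^sup>* S.G2 H"
      "p_hamiltonian p H"
      "three_edge_connected S.G2 \<longrightarrow>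
        (\<lambda>A B. is_graph A \<and> is_graph B \<and> three_edge_connected A \<and> three_edge_connected B \<and>
            strongly_linked A B)\<^sup>*\<^sup>* S.G2 H \<and> three_edge_connected H"
      using less.hyps[OF S.G2_loops S.G2_graph S.G2_reg[OF less.prems(2)] S.G2_ham[OF less.prems(3) C(3)]]
      by blast
    have r1: "(\<lambda>A B. is_graph A \<and> is_graph B \<and> strongly_linked A B)\<^sup>*\<^sup>* G H"
      using H(1) less.prems(1) S.G2_graph S.G2_sl by (auto intro: converse_rtranclp_into_rtranclp)
    have r2: "three_edge_connected G \<longrightarrow>
        (\<lambda>A B. is_graph A \<and> is_graph B \<and> three_edge_connected A \<and> three_edge_connected B \<and>
            strongly_linked A B)\<^sup>*\<^sup>* G H \<and> three_edge_connected H"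
    proof
      assume t: "three_edge_connected G"
      then have t2: "three_edge_connected S.G2" by (rule S.G2_3ec)
      then have "(\<lambda>A B. is_graph A \<and> is_graph B \<and> three_edge_connected A \<and> three_edge_connected B \<and>
            strongly_linked A B)\<^sup>*\<^sup>* S.G2 H" "three_edge_connected H" using H(3) by auto
      then show "(\<lambda>A B. is_graph A \<and> is_graph B \<and> three_edge_connected A \<and> three_edge_connected B \<and>
            strongly_linked A B)\<^sup>*\<^sup>* G H \<and> three_edge_connected H"
        using less.prems(1) S.G2_graph S.G2_sl t t2
        by (auto intro: converse_rtranclp_into_rtranclp)
    qed
    show ?thesis using r1 r2 H(2) by blast
  qed
qed

theorem mainTheorem3:
  fixes p :: nat and G :: "(nat, nat) mgraph"
  assumes "3 \<le> p" and "is_graph G" and "regular p G" and "hamiltonian G"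
  shows "(\<exists>H. linked G H \<and> p_hamiltonian p H) \<and>
         (three_edge_connected G \<longrightarrow>
            (\<exists>H. three_linked G H \<and> three_edge_connected H \<and> p_hamiltonian p H))"
proof -
  obtain H where H: "(\<lambda>A B. is_graph A \<and> is_graph B \<and> strongly_linked A B)\<^sup>*\<^sup>* G H" "p_hamiltonian p H"
      "three_edge_connected G \<longrightarrow>
        (\<lambda>A B. is_graph A \<and> is_graph B \<and> three_edge_connected A \<and> three_edge_connected B \<and>
            strongly_linked A B)\<^sup>*\<^sup>* G H \<and> three_edge_connected H"
    using main_ind[OF assms(2,3,4)] by blast
  have gH: "is_graph H" using H(1) assms(2) by (induction rule: rtranclp_induct) auto
  show ?thesis unfolding linked_def three_linked_def using H gH assms(2) by blast
qed

end
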